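(* Let $-1 \le a < b \le 1$, $\alpha=\arccos a$, $\beta=\arccos b$. Define $g:[0,\pi]\to\mathbb{R}$ by $g(\theta)=1$ for $\theta\in(\beta,\alpha)$, $g(\theta)=\tfrac12$ for $\theta\in\{\alpha,\beta\}$, $g(\theta)=0$ for $\theta\in[0,\pi]\setminus[\beta,\alpha]$, and let $c_0=\frac{1}{\pi}(\alpha-\beta)$, $c_j=\frac{2}{\pi}\cdot\frac{\sin(j\alpha)-\sin(j\beta)}{j}$ for $j\ge1$. For $m>0$ and integers $k\ge1$, define the exponent-$m$ Lanczos damping factors $d^m_{0,k}=1$ and \[ d^m_{j,k}=\left(\frac{\sin\left(\frac{j\pi}{k+1}\right)}{\frac{j\pi}{k+1}}\right)^m,\quad j\ge 1, \] and for an integer $k'$ with $1\le k'\le k$ define $g^m_{k',k}(\theta)=\sum_{j=0}^{k'} c_j\, d^m_{j,k}\cos(j\theta)$. Then for every $m>0$, every integer $k\ge1$, every integer $1\le k'\le k$, and every $\theta\in[0,\pi]$, \[ |g(\theta)-g^m_{k',k}(\theta)|\le \frac{d^m_{k',k}\,J(\theta)}{\pi(k'+1)}+\frac{m\,\mathcal{C}_m\,J(\theta)}{k+1}+\frac{m\pi(\pi-\theta)}{3(k+1)^2}, \] where \[ \mathcal{C}_m=\int_0^{\pi}\frac{(\sin u)^{m-1}(\sin u-u\cos u)}{u^{m+2}}\,du, \] and \[ J(\theta)=\begin{cases} \frac{1}{|\sin\frac{\theta+\alpha}{2}|}+\frac{1}{|\sin\frac{\theta-\alpha}{2}|}+\frac{1}{|\sin\frac{\theta+\beta}{2}|}+\frac{1}{|\sin\frac{\theta-\beta}{2}|},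 & \theta\ne\alpha,\beta,\\[4pt] \frac{1}{|\sin\alpha|}+\frac{1}{|\sin\frac{\alpha+\beta}{2}|}+\frac{1}{|\sin\frac{\alpha-\beta}{2}|}, & \theta=\alpha,\\[4pt] \frac{1}{|\sin\beta|}+\frac{1}{|\sin\frac{\alpha+\beta}{2}|}+\frac{1}{|\sin\frac{\alpha-\beta}{2}|}, & \theta=\beta. \end{cases} \]
   Context: Any term of the form $1/0$ in $J(\theta)$ is interpreted as $+\infty$, in which case the bound holds trivially. The function $g^m_{k',k}$ is a damped partial Fourier cosine sum of $g$, where the damping factors are computed for the maximal degree $k$ but the sum is truncated at degree $k'$. *)

theory Defs
  imports "HOL-Analysis.Analysis" "HOL-Library.Extended_Real"
begin

definition gfun :: "real \<Rightarrow> real \<Rightarrow> real \<Rightarrow> real" where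
  "gfun a b \<theta> = (let \<alpha> = arccos a; \<beta> = arccos b in
     if \<beta> < \<theta> \<and> \<theta> < \<alpha> then 1
     else if \<theta> = \<alpha> \<or> \<theta> = \<beta> then 1/2
     else 0)"

definition coef :: "real \<Rightarrow> real \<Rightarrow> nat \<Rightarrow> real" where
  "coef a b j = (let \<alpha> = arccos a; \<beta> = arccos b in
     if j = 0 then (\<alpha> - \<beta>) / pi
     else (2 / pi) * ((sin (real j * \<alpha>) - sin (real j * \<beta>)) / real j))"

definition lanczos :: "real \<Rightarrow> nat \<Rightarrow> nat \<Rightarrow> real" where
  "lanczos m j k = (if j = 0 then 1 else
     (let x = real j * pi / (real k + 1) in (sin x / x) powr m))"

definition gmk :: "real \<Rightarrow> real \<Rightarrow> real \<Rightarrow> nat \<Rightarrow> nat \<Rightarrow> real \<Rightarrow> real" where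
  "gmk a b m k' k \<theta> = (\<Sum>j = 0..k'. coef a b j * lanczos m j k * cos (real j * \<theta>))"

definition Cm :: "real \<Rightarrow> real" where
  "Cm m = integral {0..pi}
     (\<lambda>u. (sin u) powr (m - 1) * (sin u - u * cos u) / u powr (m + 2))"

definition inv_abs :: "real \<Rightarrow> ereal" where
  "inv_abs x = (if x = 0 then \<infinity> else ereal (1 / \<bar>x\<bar>))"

definition Jfun :: "real \<Rightarrow> real \<Rightarrow> real \<Rightarrow> ereal" where
  "Jfun a b \<theta> = (let \<alpha> = arccos a; \<beta> = arccos b in
     if \<theta> = \<alpha> then inv_abs (sin \<alpha>) + inv_abs (sin ((\<alpha> + \<beta>) / 2)) + inv_abs (sin ((\<alpha> - \<beta>) / 2))
     else if \<theta> = \<beta> then inv_abs (sin \<beta>) + inv_abs (sin ((\<alpha> + \<beta>) / 2)) + inv_abs (sin ((\<alpha> - \<beta>) / 2))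
     else inv_abs (sin ((\<theta> + \<alpha>) / 2)) + inv_abs (sin ((\<theta> - \<alpha>) / 2))
        + inv_abs (sin ((\<theta> + \<beta>) / 2)) + inv_abs (sin ((\<theta> - \<beta>) / 2)))"

end

theory Submission
  imports Defs
begin

definition Ssum :: "nat \<Rightarrow> real \<Rightarrow> real" where
  "Ssum n x = (\<Sum>j = 1..n. sin (real j * x) / real j)"

definition Dk :: "nat \<Rightarrow> real \<Rightarrow> real" where
  "Dk i x = - cos ((real i + 1/2) * x) / (2 * sin (x/2))"

lemma sin_Dk:
  assumes "sin (x/2) \<noteq> 0" "i \<ge> 1"
  shows "sin (real i * x) = Dk i x - Dk (i - 1) x"
proof -
  have e: "2 * sin (real i * x) * sin (x/2) = cos ((real (i-1) + 1/2) * x) - cos ((real i + 1/2) * x)"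
  proof -
    have "2 * sin (real i * x) * sin (x/2) = cos (real i * x - x/2) - cos (real i * x + x/2)"
      by (simp add: cos_diff cos_add)
    moreover have "real i * x - x/2 = (real (i-1) + 1/2) * x" using assms(2)
      by (simp add: of_nat_diff algebra_simps)
    moreover have "real i * x + x/2 = (real i + 1/2) * x" by (simp add: algebra_simps)
    ultimately show ?thesis by simp
  qed
  show ?thesis using assms(1) e unfolding Dk_def by (simp add: field_simps)
qed

lemma Dk_bound: "\<bar>Dk i x\<bar> \<le> 1 / (2 * \<bar>sin (x/2)\<bar>)"
  unfolding Dk_def by (simp add: abs_divide abs_mult divide_right_mono)

lemma Ssum_diff_identity:
  assumes "sin (x/2) \<noteq> 0"
  shows "Ssum (n + p) x - Ssum n x = Dk (n+p) x / (real (n+p) + 1) - Dk n x / (real n + 1)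
     + (\<Sum>i = n+1..n+p. Dk i x * (1 / real i - 1 / (real i + 1)))"
proof (induction p)
  case 0
  then show ?case by simp
next
  case (Suc p)
  have "Ssum (n + Suc p) x = Ssum (n + p) x + sin (real (n + Suc p) * x) / real (n + Suc p)"
    unfolding Ssum_def by simp
  also have "sin (real (n + Suc p) * x) = Dk (n + Suc p) x - Dk (n+p) x"
    using sin_Dk[OF assms, of "n + Suc p"] by simp
  finally have 1: "Ssum (n + Suc p) x = Ssum (n + p) x + (Dk (n + Suc p) x - Dk (n+p) x) / real (n + Suc p)" .
  have 2: "(\<Sum>i = n+1..n+Suc p. Dk i x * (1 / real i - 1 / (real i + 1))) =
     (\<Sum>i = n+1..n+p. Dk i x * (1 / real i - 1 / (real i + 1))) + Dk (n + Suc p) x * (1 / real (n + Suc p) - 1 / (real (n + Suc p) + 1))"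
    by simp
  define D' where "D' = Dk (n + Suc p) x"
  define D where "D = Dk (n + p) x"
  define M where "M = real (n + p) + 1"
  have M1: "real (n + Suc p) = M" "real (n + Suc p) + 1 = M + 1" unfolding M_def by simp_all
  have M0: "M > 0" unfolding M_def by simp
  have a: "(D' - D) / M = D' / M - D / M" by (simp add: diff_divide_distrib)
  have b: "D' * (1 / M - 1 / (M + 1)) = D' / M - D' / (M + 1)" by (simp add: right_diff_distrib)
  show ?case using Suc 1 2 a b unfolding M1 D'_def[symmetric] D_def[symmetric] M_def[symmetric]
    by linarith
qed

lemma telescope_inv:
  "(\<Sum>i = n+1..n+p. (1 / real i - 1 / (real i + 1))) = 1 / (real n + 1) - 1 / (real (n+p) + 1)"
proof (induction p)
  case 0 then show ?case by simp
next
  case (Suc p)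
  have "(\<Sum>i = n+1..n+Suc p. (1 / real i - 1 / (real i + 1))) =
    (\<Sum>i = n+1..n+p. (1 / real i - 1 / (real i + 1))) + (1 / real (n + Suc p) - 1 / (real (n + Suc p) + 1))"
    by simp
  also have "real (n + Suc p) = real (n+p) + 1" by simp
  finally show ?case using Suc by simp
qed

lemma half_helper: "(t::real) > 0 \<Longrightarrow> (n::real) \<ge> 0 \<Longrightarrow> 1 / (2 * t) / (n + 1) + 1 / (2 * t) / (n + 1) = 1 / ((n + 1) * t)"
proof -
  assume "t > 0" "n \<ge> 0"
  then have "(n+1)*t > 0" by simp
  then show ?thesis by (simp add: field_split_simps)
qed

lemma Ssum_diff_bound:
  assumes "sin (x/2) \<noteq> 0" "n \<le> N"
  shows "\<bar>Ssum N x - Ssum n x\<bar> \<le> 1 / ((real n + 1) * \<bar>sin (x/2)\<bar>)"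
proof -
  obtain p where N: "N = n + p" using assms(2) le_Suc_ex by blast
  define c where "c = 1 / (2 * \<bar>sin (x/2)\<bar>)"
  have c0: "c > 0" using assms(1) by (simp add: c_def)
  have "\<bar>(\<Sum>i = n+1..n+p. Dk i x * (1 / real i - 1 / (real i + 1)))\<bar>
      \<le> (\<Sum>i = n+1..n+p. \<bar>Dk i x * (1 / real i - 1 / (real i + 1))\<bar>)"
    by (rule sum_abs)
  also have "\<dots> \<le> (\<Sum>i = n+1..n+p. c * (1 / real i - 1 / (real i + 1)))"
  proof (rule sum_mono)
    fix i assume "i \<in> {n+1..n+p}"
    then have i: "real i \<ge> 1" by auto
    have nn: "1 / real i - 1 / (real i + 1) \<ge> 0" using i by (simp add: field_simps)
    have "\<bar>Dk i x * (1 / real i - 1 / (real i + 1))\<bar> = \<bar>Dk i x\<bar> * (1 / real i - 1 / (real i + 1))"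
      using nn by (simp add: abs_mult)
    also have "\<dots> \<le> c * (1 / real i - 1 / (real i + 1))"
      using Dk_bound[of i x] nn unfolding c_def by (rule mult_right_mono)
    finally show "\<bar>Dk i x * (1 / real i - 1 / (real i + 1))\<bar> \<le> c * (1 / real i - 1 / (real i + 1))" .
  qed
  also have "\<dots> = c * (1 / (real n + 1) - 1 / (real (n+p) + 1))"
    by (simp only: sum_distrib_left[symmetric] telescope_inv)
  finally have A: "\<bar>(\<Sum>i = n+1..n+p. Dk i x * (1 / real i - 1 / (real i + 1)))\<bar> \<le> c * (1 / (real n + 1) - 1 / (real (n+p) + 1))" .
  have B: "\<bar>Dk (n+p) x / (real (n+p) + 1)\<bar> \<le> c / (real (n+p) + 1)"
  proof -
    have "\<bar>Dk (n+p) x / (real (n+p) + 1)\<bar> = \<bar>Dk (n+p) x\<bar> / (real (n+p) + 1)" by (simp add: abs_divide)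
    also have "\<dots> \<le> c / (real (n+p) + 1)" using Dk_bound[of "n+p" x] unfolding c_def by (rule divide_right_mono) simp
    finally show ?thesis .
  qed
  have C: "\<bar>Dk n x / (real n + 1)\<bar> \<le> c / (real n + 1)"
  proof -
    have "\<bar>Dk (n) x / (real (n) + 1)\<bar> = \<bar>Dk (n) x\<bar> / (real (n) + 1)" by (simp add: abs_divide)
    also have "\<dots> \<le> c / (real (n) + 1)" using Dk_bound[of "n" x] unfolding c_def by (rule divide_right_mono) simp
    finally show ?thesis .
  qed
  have "\<bar>Ssum N x - Ssum n x\<bar> \<le> c / (real (n+p) + 1) + c / (real n + 1) + c * (1 / (real n + 1) - 1 / (real (n+p) + 1))"
    using Ssum_diff_identity[OF assms(1), of n p] A B C unfolding N by linarith
  also have "\<dots> = c / (real n + 1) + c / (real n + 1)" by (simp add: right_diff_distrib)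
  also have "\<dots> = 1 / ((real n + 1) * \<bar>sin (x/2)\<bar>)" using assms(1) unfolding c_def by (intro half_helper) auto
  finally show ?thesis .
qed

lemma cos_sum_identity:
  "2 * sin (t/2) * (\<Sum>j = 1..N. cos (real j * t)) = sin ((real N + 1/2) * t) - sin (t/2)"
proof (induction N)
  case 0 then show ?case by simp
next
  case (Suc N)
  have e: "2 * sin (t/2) * cos (real (Suc N) * t) = sin ((real (Suc N) + 1/2) * t) - sin ((real N + 1/2) * t)"
  proof -
    have "2 * sin (t/2) * cos (real (Suc N) * t) = sin (real (Suc N) * t + t/2) - sin (real (Suc N) * t - t/2)"
      by (simp add: sin_add sin_diff)
    moreover have "real (Suc N) * t + t/2 = (real (Suc N) + 1/2) * t" by (simp add: algebra_simps)
    moreover have "real (Suc N) * t - t/2 = (real N + 1/2) * t" by (simp add: algebra_simps)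
    ultimately show ?thesis by simp
  qed
  have "2 * sin (t/2) * (\<Sum>j = 1..Suc N. cos (real j * t)) = 2 * sin (t/2) * (\<Sum>j = 1..N. cos (real j * t)) + 2 * sin (t/2) * cos (real (Suc N) * t)"
    by (simp add: distrib_left)
  then show ?case using Suc e by simp
qed

lemma Ssum_deriv: "(Ssum N has_real_derivative (\<Sum>j = 1..N. cos (real j * t))) (at t)"
proof -
  have "((\<lambda>x. \<Sum>j = 1..N. sin (real j * x) / real j) has_real_derivative (\<Sum>j = 1..N. cos (real j * t))) (at t)"
  proof (rule DERIV_sum)
    fix j assume "j \<in> {1..N}"
    then have j: "real j \<noteq> 0" "0 < j" by auto
    show "((\<lambda>x. sin (real j * x) / real j) has_real_derivative cos (real j * t)) (at t)"
      by (rule derivative_eq_intros refl | simp add: j)+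
  qed
  then show ?thesis unfolding Ssum_def[abs_def] .
qed

definition hN :: "nat \<Rightarrow> real \<Rightarrow> real" where
  "hN N x = (pi - x) / 2 - Ssum N x"

lemma hN_deriv:
  assumes "sin (t/2) \<noteq> 0"
  shows "(hN N has_real_derivative (- sin ((real N + 1/2) * t) / (2 * sin (t/2)))) (at t)"
proof -
  have "(hN N has_real_derivative (- 1/2 - (\<Sum>j = 1..N. cos (real j * t)))) (at t)"
    unfolding hN_def[abs_def]
    by (rule derivative_eq_intros Ssum_deriv refl | simp)+
  moreover have "- 1/2 - (\<Sum>j = 1..N. cos (real j * t)) = - sin ((real N + 1/2) * t) / (2 * sin (t/2))"
    using cos_sum_identity[of t N] assms by (simp add: field_simps)
  ultimately show ?thesis by simp
qed

lemma hN_pi: "hN N pi = 0"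
  unfolding hN_def Ssum_def by simp

lemma sin_half_pos: "0 < t \<Longrightarrow> t < 2*pi \<Longrightarrow> sin (t/2) > 0"
  by (rule sin_gt_zero) auto

lemma cos_half_nonneg: "0 \<le> t \<Longrightarrow> t \<le> pi \<Longrightarrow> cos (t/2) \<ge> 0"
  by (rule cos_ge_zero) auto

lemma cos_Nhalf_pi: "cos ((real N + 1/2) * pi) = 0"
proof -
  have "(real N + 1/2) * pi = real N * pi + pi/2" by (simp add: algebra_simps)
  then show ?thesis by (simp add: cos_add)
qed

lemma hN_crude_pos:
  assumes "0 < x" "x \<le> pi"
  shows "\<bar>hN N x\<bar> \<le> 2 / ((2 * real N + 1) * sin (x/2))"
proof -
  define K where "K = 2 * real N + 1"
  define a where "a = real N + 1/2"
  have K0: "K > 0" unfolding K_def by simp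
  have Kne: "K \<noteq> 0" using K0 by simp
  have Ka: "K = 2 * a" unfolding K_def a_def by simp
  define G :: "real \<Rightarrow> real" where "G t = cos (a * t) / (K * sin (t/2))" for t
  define Q :: "real \<Rightarrow> real" where "Q t = 1 / sin (t/2)" for t
  have sp: "sin (t/2) > 0" if "x \<le> t" "t \<le> pi" for t
    using sin_half_pos[of t] that assms by auto
  have cp: "cos (t/2) \<ge> 0" if "x \<le> t" "t \<le> pi" for t
    using cos_half_nonneg[of t] that assms by auto
  have dG: "(G has_real_derivative (- sin (a * t) / (2 * sin (t/2)) - cos (a * t) * cos (t/2) / (2 * K * (sin (t/2))^2))) (at t)"
    if "sin (t/2) \<noteq> 0" for t
  proof -
    have "(G has_real_derivative ((- sin (a * t) * a) * (K * sin (t/2)) - cos (a * t) * (K * (cos (t/2) / 2))) / (K * sin (t/2))^2) (at t)"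
      unfolding G_def[abs_def]
      by (rule derivative_eq_intros refl | simp add: that Kne)+ (simp add: power2_eq_square algebra_simps)
    moreover have "((- sin (a * t) * a) * (K * sin (t/2)) - cos (a * t) * (K * (cos (t/2) / 2))) / (K * sin (t/2))^2
       = - sin (a * t) / (2 * sin (t/2)) - cos (a * t) * cos (t/2) / (2 * K * (sin (t/2))^2)"
      using that K0 unfolding Ka by (simp add: field_simps power2_eq_square)
    ultimately show ?thesis by simp
  qed
  have dQ: "(Q has_real_derivative (- cos (t/2) / (2 * (sin (t/2))^2))) (at t)"
    if "sin (t/2) \<noteq> 0" for t
  proof -
    have "(Q has_real_derivative (- (cos (t/2) / 2) / (sin (t/2))^2)) (at t)"
      unfolding Q_def[abs_def]
      by (rule derivative_eq_intros refl | simp add: that)+ (simp add: power2_eq_square)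
    then show ?thesis by (simp add: field_simps)
  qed
  have dh: "(hN N has_real_derivative (- sin (a * t) / (2 * sin (t/2)))) (at t)" if "sin (t/2) \<noteq> 0" for t
    using hN_deriv[OF that, of N] unfolding a_def .
  have m1: "hN N x - G x - Q x / K \<le> hN N pi - G pi - Q pi / K"
  proof (rule DERIV_nonneg_imp_nondecreasing[OF assms(2)])
    fix t assume t: "x \<le> t" "t \<le> pi"
    have s0: "sin (t/2) \<noteq> 0" using sp[OF t] by simp
    have D: "((\<lambda>t. hN N t - G t - Q t / K) has_real_derivative
       (- sin (a * t) / (2 * sin (t/2))) - (- sin (a * t) / (2 * sin (t/2)) - cos (a * t) * cos (t/2) / (2 * K * (sin (t/2))^2))
        - (- cos (t/2) / (2 * (sin (t/2))^2)) / K) (at t)"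
      by (intro derivative_intros DERIV_cdivide dh dG dQ s0)
    have "(- sin (a * t) / (2 * sin (t/2))) - (- sin (a * t) / (2 * sin (t/2)) - cos (a * t) * cos (t/2) / (2 * K * (sin (t/2))^2))
        - (- cos (t/2) / (2 * (sin (t/2))^2)) / K = cos (t/2) * (cos (a * t) + 1) / (2 * K * (sin (t/2))^2)"
      using K0 s0 by (simp add: field_simps)
    moreover have "cos (t/2) * (cos (a * t) + 1) / (2 * K * (sin (t/2))^2) \<ge> 0"
    proof -
      have "cos (a*t) + 1 \<ge> 0" "1 - cos (a*t) \<ge> 0" using cos_ge_minus_one[of "a*t"] cos_le_one[of "a*t"] by linarith+
      then show ?thesis using cp[OF t] K0 by (intro divide_nonneg_pos mult_nonneg_nonneg) (auto simp: s0)
    qed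
    ultimately show "\<exists>y. ((\<lambda>t. hN N t - G t - Q t / K) has_real_derivative y) (at t) \<and> 0 \<le> y"
      using D by auto
  qed
  have m2: "- (hN N x - G x + Q x / K) \<le> - (hN N pi - G pi + Q pi / K)"
  proof (rule DERIV_nonneg_imp_nondecreasing[OF assms(2)])
    fix t assume t: "x \<le> t" "t \<le> pi"
    have s0: "sin (t/2) \<noteq> 0" using sp[OF t] by simp
    have D: "((\<lambda>t. - (hN N t - G t + Q t / K)) has_real_derivative
       - ((- sin (a * t) / (2 * sin (t/2))) - (- sin (a * t) / (2 * sin (t/2)) - cos (a * t) * cos (t/2) / (2 * K * (sin (t/2))^2))
        + (- cos (t/2) / (2 * (sin (t/2))^2)) / K)) (at t)"
      by (intro derivative_intros DERIV_cdivide dh dG dQ s0)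
    have "- ((- sin (a * t) / (2 * sin (t/2))) - (- sin (a * t) / (2 * sin (t/2)) - cos (a * t) * cos (t/2) / (2 * K * (sin (t/2))^2))
        + (- cos (t/2) / (2 * (sin (t/2))^2)) / K) = cos (t/2) * (1 - cos (a * t)) / (2 * K * (sin (t/2))^2)"
      using K0 s0 by (simp add: field_simps)
    moreover have "cos (t/2) * (1 - cos (a * t)) / (2 * K * (sin (t/2))^2) \<ge> 0"
    proof -
      have "cos (a*t) + 1 \<ge> 0" "1 - cos (a*t) \<ge> 0" using cos_ge_minus_one[of "a*t"] cos_le_one[of "a*t"] by linarith+
      then show ?thesis using cp[OF t] K0 by (intro divide_nonneg_pos mult_nonneg_nonneg) (auto simp: s0)
    qed
    ultimately show "\<exists>y. ((\<lambda>t. - (hN N t - G t + Q t / K)) has_real_derivative y) (at t) \<and> 0 \<le> y"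
      using D by auto
  qed
  have Gpi: "G pi = 0" unfolding G_def a_def using cos_Nhalf_pi by simp
  have Qpi: "Q pi = 1" unfolding Q_def by simp
  have sx: "sin (x/2) > 0" using sp assms by auto
  have Gb: "\<bar>G x\<bar> \<le> Q x / K"
    unfolding G_def Q_def using sx K0 by (simp add: abs_divide abs_mult divide_right_mono field_simps)
  have u1: "hN N x \<le> G x + Q x / K - 1 / K" using m1 Gpi Qpi hN_pi[of N] by simp
  have u2: "hN N x \<ge> G x - Q x / K + 1 / K" using m2 Gpi Qpi hN_pi[of N] by simp
  have "1 / K > 0" using K0 by simp
  then have "\<bar>hN N x\<bar> \<le> Q x / K + Q x / K" using u1 u2 Gb unfolding abs_le_iff by linarith
  then have "\<bar>hN N x\<bar> \<le> 2 * Q x / K" by simp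
  then show ?thesis unfolding Q_def K_def by (simp add: mult.commute)
qed

definition Lf :: "real \<Rightarrow> real" where
  "Lf x = (if x = 0 then 0 else if x > 0 then (pi - x) / 2 else - (pi + x) / 2)"

lemma Ssum_neg: "Ssum N (- x) = - Ssum N x"
  unfolding Ssum_def by (simp add: sum_negf[symmetric])

lemma Ssum_reflect: "Ssum N (2*pi - x) = - Ssum N x"
proof -
  have "sin (real j * (2*pi - x)) = - sin (real j * x)" for j
  proof -
    have "real j * (2*pi - x) = real (2*j) * pi - real j * x" by (simp add: algebra_simps)
    then show ?thesis by (simp add: sin_diff)
  qed
  then show ?thesis unfolding Ssum_def by (simp add: sum_negf[symmetric])
qed

lemma crude_pos:
  assumes "0 < x" "x < 2*pi"
  shows "\<bar>Lf x - Ssum N x\<bar> \<le> 2 / ((2 * real N + 1) * \<bar>sin (x/2)\<bar>)"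
proof (cases "x \<le> pi")
  case True
  have "sin (x/2) > 0" using sin_half_pos assms by auto
  then show ?thesis using hN_crude_pos[OF assms(1) True, of N] assms unfolding Lf_def hN_def by simp
next
  case False
  define y where "y = 2*pi - x"
  have y: "0 < y" "y \<le> pi" using False assms unfolding y_def by auto
  have x: "x = 2*pi - y" using y_def by linarith
  have sy: "sin (x/2) = sin (y/2)"
  proof -
    have e: "x/2 = pi - y/2" using x by linarith
    have "sin (x/2) = sin (pi - y/2)" by (simp only: e)
    then show ?thesis by simp
  qed
  have l1: "Lf x = (pi - x) / 2" using assms unfolding Lf_def by simp
  have l2: "Ssum N x = - Ssum N y" unfolding x Ssum_reflect ..
  have "Lf x - Ssum N x = - hN N y"
  proof -
    have "(pi - x) / 2 = - ((pi - y) / 2)" unfolding x by (simp add: field_simps)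
    then show ?thesis unfolding l1 l2 hN_def by simp
  qed
  moreover have "sin (y/2) > 0" using sin_half_pos y by auto
  ultimately show ?thesis using hN_crude_pos[OF y, of N] sy by simp
qed

lemma crude:
  assumes "x \<noteq> 0" "\<bar>x\<bar> < 2*pi"
  shows "\<bar>Lf x - Ssum N x\<bar> \<le> 2 / ((2 * real N + 1) * \<bar>sin (x/2)\<bar>)"
proof (cases "x > 0")
  case True then show ?thesis using crude_pos assms by auto
next
  case False
  then have "0 < -x" "-x < 2*pi" using assms by auto
  from crude_pos[OF this, of N] have "\<bar>Lf (-x) - Ssum N (-x)\<bar> \<le> 2 / ((2 * real N + 1) * \<bar>sin (-x/2)\<bar>)" by simp
  moreover have "Lf (-x) - Ssum N (-x) = - (Lf x - Ssum N x)"
    using False assms unfolding Lf_def Ssum_neg by (auto simp: divide_simps)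
  moreover have "\<bar>sin (-x/2)\<bar> = \<bar>sin (x/2)\<bar>" by simp
  ultimately show ?thesis by simp
qed

lemma sin_half_nz: "x \<noteq> 0 \<Longrightarrow> \<bar>x\<bar> < 2*pi \<Longrightarrow> sin (x/2) \<noteq> 0"
proof -
  assume a: "x \<noteq> 0" "\<bar>x\<bar> < 2*pi"
  show ?thesis
  proof (cases "x > 0")
    case True then show ?thesis using sin_half_pos[of x] a by auto
  next
    case False then have "sin (-x/2) > 0" using sin_half_pos[of "-x"] a by auto
    then show ?thesis by auto
  qed
qed

lemma R_bound:
  assumes "x \<noteq> 0" "\<bar>x\<bar> < 2*pi"
  shows "\<bar>Lf x - Ssum n x\<bar> \<le> 1 / ((real n + 1) * \<bar>sin (x/2)\<bar>)"
proof (rule ccontr)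
  assume nt: "\<not> ?thesis"
  define s where "s = \<bar>sin (x/2)\<bar>"
  have s0: "s > 0" using sin_half_nz[OF assms] unfolding s_def by simp
  define \<delta> where "\<delta> = \<bar>Lf x - Ssum n x\<bar> - 1 / ((real n + 1) * s)"
  have d0: "\<delta> > 0" using nt unfolding \<delta>_def s_def by simp
  obtain M :: nat where M: "1 / (\<delta> * s) < real M" using reals_Archimedean2 by blast
  define N where "N = max n M"
  have Nn: "n \<le> N" unfolding N_def by simp
  have NM: "real M \<le> real N" unfolding N_def by simp
  have c1: "\<bar>Lf x - Ssum N x\<bar> \<le> 2 / ((2 * real N + 1) * s)" using crude[OF assms] unfolding s_def .
  have c2: "\<bar>Ssum N x - Ssum n x\<bar> \<le> 1 / ((real n + 1) * s)"
    using Ssum_diff_bound[OF sin_half_nz[OF assms] Nn] unfolding s_def .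
  have "2 / ((2 * real N + 1) * s) < \<delta>"
  proof -
    have "1 / (\<delta> * s) < real N" using M NM by linarith
    then have "1 < real N * (\<delta> * s)" using d0 s0 by (simp add: field_simps)
    moreover have "(2 * real N + 1) * s * \<delta> = 2 * (real N * (\<delta> * s)) + s * \<delta>" by (simp add: algebra_simps)
    moreover have "s * \<delta> > 0" using d0 s0 by simp
    ultimately have "2 < (2 * real N + 1) * s * \<delta>" by linarith
    moreover have pos: "(2 * real N + 1) * s > 0" using s0 by simp
    moreover have "(2 * real N + 1) * s * \<delta> = \<delta> * ((2 * real N + 1) * s)" by simp
    ultimately show ?thesis using pos_divide_less_eq[OF pos, of 2 \<delta>] by linarith
  qed
  then have "\<bar>Lf x - Ssum n x\<bar> < \<delta> + 1 / ((real n + 1) * s)" using c1 c2 by linarith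
  then show False unfolding \<delta>_def by simp
qed

lemma weighted_identity:
  fixes d :: "nat \<Rightarrow> real"
  assumes "d 0 = 1"
  shows "Lf x - (\<Sum>j = 1..n. d j * (sin (real j * x) / real j))
    = (\<Sum>j<n. (d j - d (Suc j)) * (Lf x - Ssum j x)) + d n * (Lf x - Ssum n x)"
proof (induction n)
  case 0
  then show ?case using assms by (simp add: Ssum_def)
next
  case (Suc n)
  have u: "sin (real (Suc n) * x) / real (Suc n) = (Lf x - Ssum n x) - (Lf x - Ssum (Suc n) x)"
    unfolding Ssum_def by simp
  have "Lf x - (\<Sum>j = 1..Suc n. d j * (sin (real j * x) / real j))
     = Lf x - (\<Sum>j = 1..n. d j * (sin (real j * x) / real j)) - d (Suc n) * (sin (real (Suc n) * x) / real (Suc n))"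
    by simp
  also have "\<dots> = (\<Sum>j<n. (d j - d (Suc j)) * (Lf x - Ssum j x)) + d n * (Lf x - Ssum n x)
      - d (Suc n) * ((Lf x - Ssum n x) - (Lf x - Ssum (Suc n) x))"
    unfolding Suc u ..
  also have "\<dots> = (\<Sum>j<Suc n. (d j - d (Suc j)) * (Lf x - Ssum j x)) + d (Suc n) * (Lf x - Ssum (Suc n) x)"
    by (simp add: algebra_simps)
  finally show ?case .
qed

lemma weighted_bound:
  fixes d :: "nat \<Rightarrow> real"
  assumes d0: "d 0 = 1" and mono: "\<And>j. j < n \<Longrightarrow> d (Suc j) \<le> d j" and dn: "d n \<ge> 0"
    and x: "x \<noteq> 0" "\<bar>x\<bar> < 2*pi"
  shows "\<bar>Lf x - (\<Sum>j = 1..n. d j * (sin (real j * x) / real j))\<bar>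
     \<le> (d n / (real n + 1) + (\<Sum>j<n. (d j - d (Suc j)) / (real j + 1))) / \<bar>sin (x/2)\<bar>"
proof -
  define s where "s = \<bar>sin (x/2)\<bar>"
  have s0: "s > 0" using sin_half_nz[OF x] unfolding s_def by simp
  have Rb: "\<bar>Lf x - Ssum j x\<bar> \<le> 1 / ((real j + 1) * s)" for j
    using R_bound[OF x] unfolding s_def .
  have "\<bar>(\<Sum>j<n. (d j - d (Suc j)) * (Lf x - Ssum j x))\<bar> \<le> (\<Sum>j<n. \<bar>(d j - d (Suc j)) * (Lf x - Ssum j x)\<bar>)"
    by (rule sum_abs)
  also have "\<dots> \<le> (\<Sum>j<n. (d j - d (Suc j)) * (1 / ((real j + 1) * s)))"
  proof (rule sum_mono)
    fix j assume "j \<in> {..<n}"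
    then have nn: "d j - d (Suc j) \<ge> 0" using mono by auto
    show "\<bar>(d j - d (Suc j)) * (Lf x - Ssum j x)\<bar> \<le> (d j - d (Suc j)) * (1 / ((real j + 1) * s))"
      unfolding abs_mult using nn mult_left_mono[OF Rb[of j] nn] by simp
  qed
  also have "\<dots> = (\<Sum>j<n. (d j - d (Suc j)) / (real j + 1)) / s"
    by (simp add: sum_divide_distrib)
  finally have A: "\<bar>(\<Sum>j<n. (d j - d (Suc j)) * (Lf x - Ssum j x))\<bar> \<le> (\<Sum>j<n. (d j - d (Suc j)) / (real j + 1)) / s" .
  have B: "\<bar>d n * (Lf x - Ssum n x)\<bar> \<le> d n / (real n + 1) / s"
    unfolding abs_mult using dn mult_left_mono[OF Rb[of n] dn] by simp
  have "\<bar>Lf x - (\<Sum>j = 1..n. d j * (sin (real j * x) / real j))\<bar> \<le> d n / (real n + 1) / s + (\<Sum>j<n. (d j - d (Suc j)) / (real j + 1)) / s"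
    unfolding weighted_identity[of d, OF d0] using A B by linarith
  also have "\<dots> = (d n / (real n + 1) + (\<Sum>j<n. (d j - d (Suc j)) / (real j + 1))) / s"
    by (simp add: add_divide_distrib)
  finally show ?thesis unfolding s_def .
qed

definition SW :: "(nat \<Rightarrow> real) \<Rightarrow> nat \<Rightarrow> real \<Rightarrow> real" where
  "SW d n x = (\<Sum>j = 1..n. d j * (sin (real j * x) / real j))"

lemma gmk_expand:
  assumes "arccos a = \<alpha>" "arccos b = \<beta>"
  shows "gmk a b m k' k \<theta> = (\<alpha> - \<beta>) / pi
     + (SW (\<lambda>j. lanczos m j k) k' (\<alpha> + \<theta>) + SW (\<lambda>j. lanczos m j k) k' (\<alpha> - \<theta>)
        - SW (\<lambda>j. lanczos m j k) k' (\<beta> + \<theta>) - SW (\<lambda>j. lanczos m j k) k' (\<beta> - \<theta>)) / pi"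
proof -
  define d where "d j = lanczos m j k" for j
  have t: "coef a b j * lanczos m j k * cos (real j * \<theta>) =
      (d j * (sin (real j * (\<alpha> + \<theta>)) / real j) + d j * (sin (real j * (\<alpha> - \<theta>)) / real j)
     - d j * (sin (real j * (\<beta> + \<theta>)) / real j) - d j * (sin (real j * (\<beta> - \<theta>)) / real j)) / pi"
    if "j \<in> {1..k'}" for j
  proof -
    have j: "j \<noteq> 0" using that by auto
    have e1: "2 * sin (real j * \<alpha>) * cos (real j * \<theta>) = sin (real j * (\<alpha> + \<theta>)) + sin (real j * (\<alpha> - \<theta>))"
      by (simp add: distrib_left right_diff_distrib sin_add sin_diff)
    have e2: "2 * sin (real j * \<beta>) * cos (real j * \<theta>) = sin (real j * (\<beta> + \<theta>)) + sin (real j * (\<beta> - \<theta>))"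
      by (simp add: distrib_left right_diff_distrib sin_add sin_diff)
    have "coef a b j * lanczos m j k * cos (real j * \<theta>) =
       d j * (2 * sin (real j * \<alpha>) * cos (real j * \<theta>) - 2 * sin (real j * \<beta>) * cos (real j * \<theta>)) / (pi * real j)"
      unfolding coef_def d_def using assms j by (simp add: Let_def field_simps)
    also have "\<dots> = d j * ((sin (real j * (\<alpha> + \<theta>)) + sin (real j * (\<alpha> - \<theta>))) - (sin (real j * (\<beta> + \<theta>)) + sin (real j * (\<beta> - \<theta>)))) / (pi * real j)"
      unfolding e1 e2 ..
    also have "\<dots> = (d j * (sin (real j * (\<alpha> + \<theta>)) / real j) + d j * (sin (real j * (\<alpha> - \<theta>)) / real j)
     - d j * (sin (real j * (\<beta> + \<theta>)) / real j) - d j * (sin (real j * (\<beta> - \<theta>)) / real j)) / pi"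
      using j by (simp add: field_simps)
    finally show ?thesis .
  qed
  have "gmk a b m k' k \<theta> = coef a b 0 * lanczos m 0 k * cos (real 0 * \<theta>) + (\<Sum>j = 1..k'. coef a b j * lanczos m j k * cos (real j * \<theta>))"
    unfolding gmk_def by (simp add: sum.atLeast_Suc_atMost)
  also have "coef a b 0 * lanczos m 0 k * cos (real 0 * \<theta>) = (\<alpha> - \<beta>) / pi"
    unfolding coef_def lanczos_def using assms by simp
  also have "(\<Sum>j = 1..k'. coef a b j * lanczos m j k * cos (real j * \<theta>)) =
     (\<Sum>j = 1..k'. (d j * (sin (real j * (\<alpha> + \<theta>)) / real j) + d j * (sin (real j * (\<alpha> - \<theta>)) / real j)
     - d j * (sin (real j * (\<beta> + \<theta>)) / real j) - d j * (sin (real j * (\<beta> - \<theta>)) / real j)) / pi)"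
    using t by (rule sum.cong[OF refl])
  also have "\<dots> = (SW d k' (\<alpha> + \<theta>) + SW d k' (\<alpha> - \<theta>) - SW d k' (\<beta> + \<theta>) - SW d k' (\<beta> - \<theta>)) / pi"
    unfolding SW_def by (simp add: sum_divide_distrib[symmetric] sum.distrib sum_subtractf)
  finally show ?thesis unfolding d_def[abs_def] .
qed

lemma g_identity:
  assumes "arccos a = \<alpha>" "arccos b = \<beta>" "0 \<le> \<beta>" "\<beta> < \<alpha>" "\<alpha> \<le> pi" "0 \<le> \<theta>" "\<theta> \<le> pi"
    and "\<not> (\<theta> = \<beta> \<and> \<beta> = 0)" "\<not> (\<theta> = \<alpha> \<and> \<alpha> = pi)"
  shows "gfun a b \<theta> = (\<alpha> - \<beta>) / pi + (Lf (\<alpha> + \<theta>) + Lf (\<alpha> - \<theta>) - Lf (\<beta> + \<theta>) - Lf (\<beta> - \<theta>)) / pi"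
proof -
  have pi0: "pi > 0" by simp
  consider "\<beta> < \<theta> \<and> \<theta> < \<alpha>" | "\<theta> < \<beta>" | "\<alpha> < \<theta>" | "\<theta> = \<alpha>" | "\<theta> = \<beta>" by linarith
  then show ?thesis
  proof cases
    case 1
    have E: "Lf (\<alpha> + \<theta>) + Lf (\<alpha> - \<theta>) - Lf (\<beta> + \<theta>) - Lf (\<beta> - \<theta>) = pi - \<alpha> + \<beta>"
      using 1 assms unfolding Lf_def by (auto simp: field_simps)
    show ?thesis unfolding E using 1 assms pi0 unfolding gfun_def by (simp add: Let_def field_simps)
  next
    case 2
    have E: "Lf (\<alpha> + \<theta>) + Lf (\<alpha> - \<theta>) - Lf (\<beta> + \<theta>) - Lf (\<beta> - \<theta>) = \<beta> - \<alpha>"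
      using 2 assms unfolding Lf_def by (auto simp: field_simps)
    show ?thesis unfolding E using 2 assms pi0 unfolding gfun_def by (simp add: Let_def field_simps)
  next
    case 3
    have E: "Lf (\<alpha> + \<theta>) + Lf (\<alpha> - \<theta>) - Lf (\<beta> + \<theta>) - Lf (\<beta> - \<theta>) = \<beta> - \<alpha>"
      using 3 assms unfolding Lf_def by (auto simp: field_simps)
    show ?thesis unfolding E using 3 assms pi0 unfolding gfun_def by (simp add: Let_def field_simps)
  next
    case 4
    have E: "Lf (\<alpha> + \<theta>) + Lf (\<alpha> - \<theta>) - Lf (\<beta> + \<theta>) - Lf (\<beta> - \<theta>) = pi/2 - \<alpha> + \<beta>"
      using 4 assms unfolding Lf_def by (auto simp: field_simps)
    show ?thesis unfolding E using 4 assms pi0 unfolding gfun_def by (simp add: Let_def field_simps)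
  next
    case 5
    have E: "Lf (\<alpha> + \<theta>) + Lf (\<alpha> - \<theta>) - Lf (\<beta> + \<theta>) - Lf (\<beta> - \<theta>) = pi/2 - \<alpha> + \<beta>"
      using 5 assms unfolding Lf_def by (auto simp: field_simps)
    show ?thesis unfolding E using 5 assms pi0 unfolding gfun_def by (simp add: Let_def field_simps)
  qed
qed

definition psi :: "real \<Rightarrow> real \<Rightarrow> real" where
  "psi m u = (sin u) powr (m - 1) * (sin u - u * cos u) / u powr (m + 2)"

definition snc :: "real \<Rightarrow> real" where
  "snc u = (if u = 0 then 1 else sin u / u)"

definition dd :: "real \<Rightarrow> real \<Rightarrow> real" where
  "dd m u = (snc u) powr m"

lemma Cm_psi: "Cm m = integral {0..pi} (psi m)"
  unfolding Cm_def psi_def[abs_def] ..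

lemma hfun_nonneg:
  assumes "0 \<le> u" "u \<le> pi"
  shows "sin u - u * cos u \<ge> 0"
proof -
  have "(\<lambda>t. sin t - t * cos t) 0 \<le> (\<lambda>t. sin t - t * cos t) u"
  proof (rule DERIV_nonneg_imp_nondecreasing[OF assms(1)])
    fix t assume t: "0 \<le> t" "t \<le> u"
    have "((\<lambda>t. sin t - t * cos t) has_real_derivative t * sin t) (at t)"
      by (rule derivative_eq_intros refl | simp add: algebra_simps)+
    moreover have "t * sin t \<ge> 0" using t assms sin_ge_zero[of t] by simp
    ultimately show "\<exists>y. ((\<lambda>t. sin t - t * cos t) has_real_derivative y) (at t) \<and> 0 \<le> y" by blast
  qed
  then show ?thesis by simp
qed

lemma hfun_le_cube:
  fixes u :: real
  assumes "0 \<le> u"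
  shows "sin u - u * cos u \<le> u^3 / 3"
proof -
  have "(\<lambda>t. t^3/3 - sin t + t * cos t) 0 \<le> (\<lambda>t. t^3/3 - sin t + t * cos t) u"
  proof (rule DERIV_nonneg_imp_nondecreasing[OF assms(1)])
    fix t assume t: "0 \<le> t" "t \<le> u"
    have "((\<lambda>t. t^3/3 - sin t + t * cos t) has_real_derivative t * (t - sin t)) (at t)"
      by (rule derivative_eq_intros refl | simp)+ (simp add: algebra_simps power2_eq_square)
    moreover have "t * (t - sin t) \<ge> 0" using t sin_x_le_x[of t] by simp
    ultimately show "\<exists>y. ((\<lambda>t. t^3/3 - sin t + t * cos t) has_real_derivative y) (at t) \<and> 0 \<le> y" by blast
  qed
  then show ?thesis by simp
qed

lemma psi_nonneg:
  assumes "0 \<le> u" "u \<le> pi"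
  shows "psi m u \<ge> 0"
  unfolding psi_def using hfun_nonneg[OF assms] by simp

lemma sinc_antimono:
  assumes "0 < u" "u \<le> v" "v \<le> pi"
  shows "sin v / v \<le> sin u / u"
proof -
  have "(\<lambda>t. - (sin t / t)) u \<le> (\<lambda>t. - (sin t / t)) v"
  proof (rule DERIV_nonneg_imp_nondecreasing[OF assms(2)])
    fix t assume t: "u \<le> t" "t \<le> v"
    have t0: "t \<noteq> 0" using t assms by simp
    have "((\<lambda>t. - (sin t / t)) has_real_derivative (sin t - t * cos t) / t^2) (at t)"
      by (rule derivative_eq_intros refl | simp add: t0)+ (simp add: field_simps power2_eq_square t0)
    moreover have "(sin t - t * cos t) / t^2 \<ge> 0" using hfun_nonneg[of t] t assms by simp
    ultimately show "\<exists>y. ((\<lambda>t. - (sin t / t)) has_real_derivative y) (at t) \<and> 0 \<le> y" by blast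
  qed
  then show ?thesis by simp
qed

lemma psi_alt:
  assumes "0 < u" "u < pi"
  shows "psi m u = (sin u / u) powr (m - 1) * (sin u - u * cos u) / u^3"
proof -
  have s: "sin u > 0" using sin_gt_zero assms by simp
  have "u powr (m + 2) = u powr (m - 1) * u^3"
  proof -
    have e: "m + 2 = (m - 1) + 3" by simp
    have "u powr (m + 2) = u powr ((m - 1) + 3)" by (subst e) (rule refl)
    also have "\<dots> = u powr (m - 1) * u powr 3" by (rule powr_add)
    also have "u powr 3 = u^3" using assms by simp
    finally show ?thesis .
  qed
  then show ?thesis unfolding psi_def powr_divide using assms s by (simp add: field_simps)
qed

lemma psi_bound_small:
  assumes "0 \<le> u" "u \<le> pi/2"
  shows "psi m u \<le> (1 + (2/pi) powr (m - 1)) / 3"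
proof (cases "u = 0")
  case True
  then show ?thesis unfolding psi_def by (simp add: add_nonneg_nonneg)
next
  case False
  then have u0: "0 < u" and upi: "u < pi" using assms pi_gt_zero by linarith+
  have s: "sin u > 0" using sin_gt_zero u0 upi by simp
  have lo: "2/pi \<le> sin u / u" using sinc_antimono[OF u0 assms(2)] by simp
  have hi: "sin u / u \<le> 1" using sin_x_le_x[of u] u0 by simp
  have pw: "(sin u / u) powr (m - 1) \<le> 1 + (2/pi) powr (m - 1)"
  proof (cases "m - 1 \<ge> 0")
    case True
    have "(sin u / u) powr (m - 1) \<le> 1 powr (m - 1)"
      by (rule powr_mono2[OF True]) (use s u0 hi in auto)
    then have A: "(sin u / u) powr (m - 1) \<le> 1" by simp
    have B: "(2/pi) powr (m - 1) \<ge> 0" by (rule powr_ge_zero)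
    from A B show ?thesis by linarith
  next
    case False
    have "(sin u / u) powr (m - 1) \<le> (2/pi) powr (m - 1)"
      by (rule powr_mono2') (use False lo in auto)
    then show ?thesis by simp
  qed
  have h: "(sin u - u * cos u) / u^3 \<le> 1/3"
    using hfun_le_cube[of u] u0 by (simp add: field_simps)
  have h0: "(sin u - u * cos u) / u^3 \<ge> 0"
    using hfun_nonneg[of u] u0 upi by simp
  have "psi m u = (sin u / u) powr (m - 1) * ((sin u - u * cos u) / u^3)"
    using psi_alt[OF u0 upi] by simp
  also have "\<dots> \<le> (1 + (2/pi) powr (m - 1)) * (1/3)"
    by (rule mult_mono[OF pw h]) (use h0 in auto)
  finally show ?thesis by simp
qed

lemma isCont_snc: "isCont snc x"
proof (cases "x = 0")
  case True
  have "((\<lambda>y::real. (sin y - sin 0) / (y - 0)) \<longlongrightarrow> cos 0) (at 0)"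
    using DERIV_sin[of "0::real"] unfolding has_field_derivative_iff by simp
  then have l: "((\<lambda>y::real. sin y / y) \<longlongrightarrow> 1) (at 0)" by simp
  have "eventually (\<lambda>y. sin y / y = snc y) (at (0::real))"
    unfolding snc_def eventually_at_filter by simp
  then have "(snc \<longlongrightarrow> 1) (at 0)" by (rule Lim_transform_eventually[OF l])
  then show ?thesis using True unfolding isCont_def snc_def by simp
next
  case False
  have c: "isCont (\<lambda>y. sin y / y) x" using False by (intro continuous_intros) auto
  have ev: "eventually (\<lambda>y. sin y / y = snc y) (at x)"
  proof -
    have "eventually (\<lambda>y. y \<noteq> 0) (at x)"
      using t1_space_nhds[OF False] unfolding eventually_at_filter by (auto elim: eventually_mono)
    then show ?thesis by eventually_elim (simp add: snc_def)
  qed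
  have "((\<lambda>y. sin y / y) \<longlongrightarrow> sin x / x) (at x)" using c unfolding isCont_def .
  then have "(snc \<longlongrightarrow> sin x / x) (at x)" using ev by (rule Lim_transform_eventually)
  moreover have "sin x / x = snc x" using False by (simp add: snc_def)
  ultimately show ?thesis unfolding isCont_def by simp
qed

lemma snc_nonneg: "0 \<le> u \<Longrightarrow> u \<le> pi \<Longrightarrow> snc u \<ge> 0"
  unfolding snc_def using sin_ge_zero by auto

lemma dd_cont: assumes "m > 0" shows "continuous_on {0..pi} (dd m)"
  unfolding dd_def[abs_def]
proof (rule continuous_on_powr')
  show "continuous_on {0..pi} snc" using isCont_snc by (simp add: continuous_at_imp_continuous_on)
  show "continuous_on {0..pi} (\<lambda>x. m)" by simp
  show "\<forall>x\<in>{0..pi}. 0 \<le> snc x \<and> (snc x = 0 \<longrightarrow> 0 < m)" using snc_nonneg assms by auto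
qed

lemma dd_deriv:
  assumes "0 < u" "u < pi"
  shows "(dd m has_real_derivative - (m * u * psi m u)) (at u)"
proof -
  have s: "sin u > 0" using sin_gt_zero assms by simp
  have g: "((\<lambda>t. sin t / t) has_real_derivative (u * cos u - sin u) / u^2) (at u)"
    using assms by (intro derivative_eq_intros refl) (auto simp: power2_eq_square algebra_simps)
  have "((\<lambda>t. (sin t / t) powr m) has_real_derivative m * (sin u / u) powr (m - of_nat 1) * ((u * cos u - sin u) / u^2)) (at u)"
    by (rule DERIV_fun_powr[OF g]) (use s assms in simp)
  then have "(dd m has_real_derivative m * (sin u / u) powr (m - of_nat 1) * ((u * cos u - sin u) / u^2)) (at u)"
    by (rule has_field_derivative_transform_within_open[where S = "{0<..}"]) (use assms in \<open>auto simp: dd_def snc_def\<close>)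
  moreover have "m * (sin u / u) powr (m - of_nat 1) * ((u * cos u - sin u) / u^2) = - (m * u * psi m u)"
    unfolding psi_alt[OF assms] using assms by (simp add: field_simps power2_eq_square power3_eq_cube)
  ultimately show ?thesis by simp
qed

lemma phi_has_integral:
  assumes "m > 0" "0 \<le> a" "a \<le> b" "b \<le> pi"
  shows "((\<lambda>u. m * u * psi m u) has_integral dd m a - dd m b) {a..b}"
proof -
  have "((\<lambda>u. - (m * u * psi m u)) has_integral dd m b - dd m a) {a..b}"
  proof (rule fundamental_theorem_of_calculus_interior[OF assms(3)])
    show "continuous_on {a..b} (dd m)" using dd_cont[OF assms(1)] by (rule continuous_on_subset) (use assms in auto)
    fix x assume "x \<in> {a<..<b}"
    then have "0 < x" "x < pi" using assms by auto
    then show "(dd m has_vector_derivative - (m * x * psi m x)) (at x)"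
      using dd_deriv has_real_derivative_iff_has_vector_derivative by blast
  qed
  from has_integral_neg[OF this] show ?thesis by simp
qed

lemma psi_meas: "psi m \<in> borel_measurable (lebesgue_on S)"
proof -
  have "psi m \<in> borel_measurable borel"
    unfolding psi_def[abs_def] by measurable
  then have "psi m \<in> borel_measurable lebesgue"
    by (intro measurable_completion) simp
  then show ?thesis by (rule measurable_restrict_space1)
qed

lemma psi_integrable:
  assumes "m > 0"
  shows "psi m integrable_on {0..pi}"
proof -
  have i1: "psi m integrable_on {0..pi/2}"
  proof (rule measurable_bounded_by_integrable_imp_integrable_real[OF psi_meas])
    show "(\<lambda>x. (1 + (2/pi) powr (m - 1)) / 3) integrable_on {0..pi/2}" by (rule integrable_const_ivl)
    fix x assume "x \<in> {0..pi/2}"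
    then show "\<bar>psi m x\<bar> \<le> (1 + (2/pi) powr (m - 1)) / 3"
      using psi_bound_small[of x m] psi_nonneg[of x m] by auto
  qed simp
  have i2: "psi m integrable_on {pi/2..pi}"
  proof (rule measurable_bounded_by_integrable_imp_integrable_real[OF psi_meas])
    have "(\<lambda>u. m * u * psi m u) integrable_on {pi/2..pi}"
      using phi_has_integral[OF assms, of "pi/2" pi] by (auto intro: has_integral_integrable)
    then show "(\<lambda>u. (2 / (m * pi)) * (m * u * psi m u)) integrable_on {pi/2..pi}"
      using integrable_on_cmult_left[of "\<lambda>u. m * u * psi m u" "{pi/2..pi}" "2 / (m * pi)"] by simp
    fix x assume x: "x \<in> {pi/2..pi}"
    have p: "psi m x \<ge> 0" using psi_nonneg[of x m] x by auto
    have "1 \<le> (2 / (m * pi)) * (m * x)" using x assms by (auto simp: field_simps)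
    then have "1 * psi m x \<le> ((2 / (m * pi)) * (m * x)) * psi m x" using p by (rule mult_right_mono)
    moreover have "((2 / (m * pi)) * (m * x)) * psi m x = (2 / (m * pi)) * (m * x * psi m x)" by (simp only: mult.assoc)
    moreover have "\<bar>psi m x\<bar> = psi m x" using p by simp
    ultimately show "\<bar>psi m x\<bar> \<le> (2 / (m * pi)) * (m * x * psi m x)" by linarith
  qed simp
  show ?thesis by (rule Henstock_Kurzweil_Integration.integrable_combine[OF _ _ i1 i2]) auto
qed

lemma lanczos_dd:
  assumes "j \<le> k"
  shows "lanczos m j k = dd m (real j * pi / (real k + 1))"
proof (cases "j = 0")
  case True then show ?thesis unfolding lanczos_def dd_def snc_def by simp
next
  case False
  then have "real j * pi / (real k + 1) \<noteq> 0" by simp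
  then show ?thesis using False unfolding lanczos_def dd_def snc_def by (simp add: Let_def)
qed

lemma sum_bound_aux:
  assumes m: "m > 0" and "n \<le> k"
  shows "(\<Sum>j<n. (lanczos m j k - lanczos m (Suc j) k) / (real j + 1))
     \<le> (pi / (real k + 1)) * m * integral {0..real n * pi / (real k + 1)} (psi m)"
  using assms(2)
proof (induction n)
  case 0
  then show ?case by simp
next
  case (Suc n)
  define a where "a = real n * pi / (real k + 1)"
  define b where "b = real (Suc n) * pi / (real k + 1)"
  have k1: "real k + 1 > 0" by simp
  have a0: "0 \<le> a" unfolding a_def by simp
  have ab: "a \<le> b" unfolding a_def b_def by (simp add: divide_right_mono)
  have bpi: "b \<le> pi"
  proof -
    have "real (Suc n) \<le> real k + 1" using Suc.prems by simp
    then have "real (Suc n) * pi \<le> (real k + 1) * pi" by (simp add: mult_right_mono)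
    then show ?thesis unfolding b_def using k1 by (simp add: divide_le_eq mult.commute)
  qed
  have la: "lanczos m n k = dd m a" unfolding a_def using Suc.prems by (intro lanczos_dd) simp
  have lb: "lanczos m (Suc n) k = dd m b" unfolding b_def using Suc.prems by (intro lanczos_dd) simp
  have pint: "psi m integrable_on {0..pi}" by (rule psi_integrable[OF m])
  have iab: "psi m integrable_on {a..b}" by (rule integrable_on_subinterval[OF pint]) (use a0 bpi in auto)
  have i0b: "psi m integrable_on {0..b}" by (rule integrable_on_subinterval[OF pint]) (use bpi in auto)
  have h1: "((\<lambda>u. m * u * psi m u) has_integral dd m a - dd m b) {a..b}"
    by (rule phi_has_integral[OF m a0 ab bpi])
  have h2: "((\<lambda>u. (b * m) * psi m u) has_integral (b * m) * integral {a..b} (psi m)) {a..b}"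
    using has_integral_mult_right[OF integrable_integral[OF iab], of "b * m"] by simp
  have le: "dd m a - dd m b \<le> (b * m) * integral {a..b} (psi m)"
  proof (rule has_integral_le[OF h1 h2])
    fix u assume u: "u \<in> {a..b}"
    then have "psi m u \<ge> 0" using psi_nonneg[of u m] a0 bpi by auto
    moreover have "m * u \<le> b * m" using u m by (simp add: mult.commute)
    ultimately show "m * u * psi m u \<le> (b * m) * psi m u" by (rule mult_right_mono[rotated])
  qed
  have b': "b = (real n + 1) * (pi / (real k + 1))" unfolding b_def by simp
  have n1: "real n + 1 \<noteq> 0" by simp
  have bn: "b / (real n + 1) = pi / (real k + 1)" unfolding b' using n1 by simp
  have step: "(lanczos m n k - lanczos m (Suc n) k) / (real n + 1) \<le> (pi / (real k + 1)) * m * integral {a..b} (psi m)"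
  proof -
    have "(lanczos m n k - lanczos m (Suc n) k) / (real n + 1) \<le> (b * m) * integral {a..b} (psi m) / (real n + 1)"
      unfolding la lb using le by (simp add: divide_right_mono)
    also have "\<dots> = (b / (real n + 1)) * m * integral {a..b} (psi m)" by simp
    finally show ?thesis unfolding bn .
  qed
  have comb: "integral {0..a} (psi m) + integral {a..b} (psi m) = integral {0..b} (psi m)"
    by (rule Henstock_Kurzweil_Integration.integral_combine[OF a0 ab i0b])
  have IH: "(\<Sum>j<n. (lanczos m j k - lanczos m (Suc j) k) / (real j + 1)) \<le> (pi / (real k + 1)) * m * integral {0..a} (psi m)"
    using Suc.IH Suc.prems unfolding a_def by simp
  have "(\<Sum>j<Suc n. (lanczos m j k - lanczos m (Suc j) k) / (real j + 1))
      = (\<Sum>j<n. (lanczos m j k - lanczos m (Suc j) k) / (real j + 1)) + (lanczos m n k - lanczos m (Suc n) k) / (real n + 1)"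
    by simp
  also have "\<dots> \<le> (pi / (real k + 1)) * m * integral {0..a} (psi m) + (pi / (real k + 1)) * m * integral {a..b} (psi m)"
    using IH step by linarith
  also have "\<dots> = (pi / (real k + 1)) * m * integral {0..b} (psi m)"
    unfolding comb[symmetric] by (simp only: distrib_left)
  finally show ?case unfolding b_def .
qed

lemma sum_bound:
  assumes m: "m > 0" and "n \<le> k"
  shows "(\<Sum>j<n. (lanczos m j k - lanczos m (Suc j) k) / (real j + 1)) \<le> (pi / (real k + 1)) * m * Cm m"
proof -
  define c where "c = real n * pi / (real k + 1)"
  have c0: "0 \<le> c" unfolding c_def by simp
  have cpi: "c \<le> pi"
  proof -
    have "real n \<le> real k + 1" using assms by simp
    then have "real n * pi \<le> (real k + 1) * pi" by (simp add: mult_right_mono)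
    then show ?thesis unfolding c_def by (simp add: divide_le_eq mult.commute)
  qed
  have pint: "psi m integrable_on {0..pi}" by (rule psi_integrable[OF m])
  have "integral {0..c} (psi m) \<le> integral {0..pi} (psi m)"
    by (rule integral_subset_le) (use cpi pint psi_nonneg in \<open>auto intro: integrable_on_subinterval[OF pint]\<close>)
  then have "(pi / (real k + 1)) * m * integral {0..c} (psi m) \<le> (pi / (real k + 1)) * m * Cm m"
    unfolding Cm_psi using m by (intro mult_left_mono) auto
  then show ?thesis using sum_bound_aux[OF assms] unfolding c_def by linarith
qed

lemma Cm_nonneg: "m > 0 \<Longrightarrow> Cm m \<ge> 0"
  unfolding Cm_psi using psi_integrable psi_nonneg by (intro integral_nonneg) auto

lemma snc_antimono:
  assumes "0 \<le> u" "u \<le> v" "v \<le> pi"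
  shows "snc v \<le> snc u"
proof (cases "u = 0")
  case True
  show ?thesis
  proof (cases "v = 0")
    case True then show ?thesis using \<open>u = 0\<close> by simp
  next
    case False
    then have "v > 0" using assms by simp
    then have "sin v / v \<le> 1" using sin_x_le_x[of v] by simp
    then show ?thesis using True False unfolding snc_def by simp
  qed
next
  case False
  then have "0 < u" using assms by simp
  then show ?thesis using sinc_antimono[OF _ assms(2,3)] assms unfolding snc_def by auto
qed

lemma lanczos_mono:
  assumes "m > 0" "Suc j \<le> k"
  shows "lanczos m (Suc j) k \<le> lanczos m j k"
proof -
  define u where "u = real j * pi / (real k + 1)"
  define v where "v = real (Suc j) * pi / (real k + 1)"
  have u0: "0 \<le> u" unfolding u_def by simp
  have uv: "u \<le> v" unfolding u_def v_def by (simp add: divide_right_mono)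
  have vpi: "v \<le> pi"
  proof -
    have "real (Suc j) \<le> real k + 1" using assms by simp
    then have "real (Suc j) * pi \<le> (real k + 1) * pi" by (simp add: mult_right_mono)
    then show ?thesis unfolding v_def by (simp add: divide_le_eq mult.commute)
  qed
  have "dd m v \<le> dd m u"
    unfolding dd_def using snc_antimono[OF u0 uv vpi] snc_nonneg[of v] uv u0 vpi assms(1)
    by (intro powr_mono2) auto
  then show ?thesis using lanczos_dd[of "Suc j" k m] lanczos_dd[of j k m] assms unfolding u_def v_def by simp
qed

lemma lanczos_pos:
  assumes "1 \<le> j" "j \<le> k"
  shows "lanczos m j k > 0"
proof -
  define x where "x = real j * pi / (real k + 1)"
  have x0: "x > 0" unfolding x_def using assms by simp
  have xpi: "x < pi"
  proof -
    have "real j < real k + 1" using assms by simp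
    then have "real j * pi < (real k + 1) * pi" by (simp add: mult_strict_right_mono)
    then show ?thesis unfolding x_def by (simp add: divide_less_eq mult.commute)
  qed
  have "sin x > 0" using sin_gt_zero x0 xpi by simp
  then have "sin x / x \<noteq> 0" using x0 by simp
  then show ?thesis using assms unfolding lanczos_def x_def[symmetric] by (simp add: Let_def x_def)
qed

lemma ereal_final:
  assumes "A > 0" "B \<ge> 0" "C \<ge> 0" "Jr \<ge> 0" "\<bar>D\<bar> \<le> (A + B) * Jr"
  shows "ereal \<bar>D\<bar> \<le> ereal A * ereal Jr + ereal B * ereal Jr + ereal C"
proof -
  have "\<bar>D\<bar> \<le> A * Jr + B * Jr + C" using assms by (simp add: distrib_right)
  then show ?thesis by simp
qed

lemma ereal_inf:
  assumes "A > 0" "B \<ge> 0"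
  shows "ereal \<bar>D\<bar> \<le> ereal A * \<infinity> + ereal B * \<infinity> + ereal C"
proof (cases "B = 0")
  case True then show ?thesis using assms by simp
next
  case False then show ?thesis using assms by simp
qed

lemma inv_abs_nz: "x \<noteq> 0 \<Longrightarrow> inv_abs x = ereal (1 / \<bar>x\<bar>)"
  unfolding inv_abs_def by simp

lemma inv_abs_0: "inv_abs 0 = \<infinity>"
  unfolding inv_abs_def by simp

lemma inv_abs_not_minf: "inv_abs x \<noteq> - \<infinity>"
  unfolding inv_abs_def by simp

theorem theorem3p3:
  fixes a b m \<theta> :: real and k k' :: nat
  assumes "-1 \<le> a" and "a < b" and "b \<le> 1"
    and "m > 0" and "1 \<le> k" and "1 \<le> k'" and "k' \<le> k"
    and "0 \<le> \<theta>" and "\<theta> \<le> pi"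
  shows "ereal \<bar>gfun a b \<theta> - gmk a b m k' k \<theta>\<bar>
     \<le> ereal (lanczos m k' k / (pi * (real k' + 1))) * Jfun a b \<theta>
       + ereal (m * Cm m / (real k + 1)) * Jfun a b \<theta>
       + ereal (m * pi * (pi - \<theta>) / (3 * (real k + 1)^2))"
proof -
  define \<alpha> where "\<alpha> = arccos a"
  define \<beta> where "\<beta> = arccos b"
  have ab: "0 \<le> \<beta>" "\<beta> < \<alpha>" "\<alpha> \<le> pi"
    using assms arccos_lbound[of b] arccos_ubound[of a] arccos_less_arccos[of a b] unfolding \<alpha>_def \<beta>_def by auto
  define d where "d j = lanczos m j k" for j
  define A where "A = lanczos m k' k / (pi * (real k' + 1))"
  define B where "B = m * Cm m / (real k + 1)"
  define C where "C = m * pi * (pi - \<theta>) / (3 * (real k + 1)^2)"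
  have A0: "A > 0" unfolding A_def using lanczos_pos[OF assms(6,7), of m] by simp
  have B0: "B \<ge> 0" unfolding B_def using Cm_nonneg[OF assms(4)] assms(4) by simp
  have C0: "C \<ge> 0" unfolding C_def using assms(4,9) by simp
  define W where "W = d k' / (real k' + 1) + (\<Sum>j<k'. (d j - d (Suc j)) / (real j + 1))"
  have WAB: "W / pi \<le> A + B"
  proof -
    have "W \<le> d k' / (real k' + 1) + (pi / (real k + 1)) * m * Cm m"
      unfolding W_def d_def using sum_bound[OF assms(4,7)] by simp
    then have "W / pi \<le> (d k' / (real k' + 1) + (pi / (real k + 1)) * m * Cm m) / pi"
      by (simp add: divide_right_mono)
    also have "\<dots> = (d k' / (real k' + 1)) / pi + ((pi / (real k + 1)) * m * Cm m) / pi"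
      by (rule add_divide_distrib)
    also have "(d k' / (real k' + 1)) / pi = A" unfolding A_def d_def by (simp add: mult.commute)
    also have "((pi / (real k + 1)) * m * Cm m) / pi = B" unfolding B_def by simp
    finally show ?thesis .
  qed
  have W0: "W \<ge> 0"
  proof -
    have "d k' \<ge> 0" unfolding d_def using lanczos_pos[OF assms(6,7), of m] by simp
    moreover have "(\<Sum>j<k'. (d j - d (Suc j)) / (real j + 1)) \<ge> 0"
      using lanczos_mono[OF assms(4)] assms(7) unfolding d_def by (intro sum_nonneg divide_nonneg_pos) auto
    ultimately show ?thesis unfolding W_def by simp
  qed
  define E where "E x = Lf x - SW d k' x" for x
  have Eb: "\<bar>E x\<bar> \<le> W / \<bar>sin (x/2)\<bar>" if "x \<noteq> 0" "\<bar>x\<bar> < 2*pi" for x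
    unfolding E_def SW_def W_def
  proof (rule weighted_bound[OF _ _ _ that])
    show "d 0 = 1" unfolding d_def lanczos_def by simp
    show "d (Suc j) \<le> d j" if "j < k'" for j unfolding d_def using lanczos_mono[OF assms(4)] that assms(7) by simp
    show "d k' \<ge> 0" unfolding d_def using lanczos_pos[OF assms(6,7), of m] by simp
  qed
  have E0: "E 0 = 0" unfolding E_def SW_def Lf_def by simp
  have gm: "gmk a b m k' k \<theta> = (\<alpha> - \<beta>) / pi + (SW d k' (\<alpha> + \<theta>) + SW d k' (\<alpha> - \<theta>) - SW d k' (\<beta> + \<theta>) - SW d k' (\<beta> - \<theta>)) / pi"
    using gmk_expand[of a \<alpha> b \<beta> m k' k \<theta>] unfolding \<alpha>_def \<beta>_def d_def[abs_def] by simp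
  have diff: "gfun a b \<theta> - gmk a b m k' k \<theta> = (E (\<alpha> + \<theta>) + E (\<alpha> - \<theta>) - E (\<beta> + \<theta>) - E (\<beta> - \<theta>)) / pi"
    if "\<not> (\<theta> = \<beta> \<and> \<beta> = 0)" "\<not> (\<theta> = \<alpha> \<and> \<alpha> = pi)"
  proof -
    have "gfun a b \<theta> = (\<alpha> - \<beta>) / pi + (Lf (\<alpha> + \<theta>) + Lf (\<alpha> - \<theta>) - Lf (\<beta> + \<theta>) - Lf (\<beta> - \<theta>)) / pi"
      by (rule g_identity) (use ab assms that in \<open>auto simp: \<alpha>_def \<beta>_def\<close>)
    then show ?thesis unfolding gm E_def by (simp add: diff_divide_distrib add_divide_distrib)
  qed
  have tri: "\<bar>(p + q - r - s) / pi\<bar> \<le> (\<bar>p\<bar> + \<bar>q\<bar> + \<bar>r\<bar> + \<bar>s\<bar>) / pi" for p q r s :: real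
    by (simp add: abs_divide divide_right_mono)
  have Jfin: "ereal \<bar>gfun a b \<theta> - gmk a b m k' k \<theta>\<bar> \<le> ereal A * ereal Jr + ereal B * ereal Jr + ereal C"
    if "Jr \<ge> 0" "\<bar>gfun a b \<theta> - gmk a b m k' k \<theta>\<bar> \<le> W / pi * Jr" for Jr
  proof (rule ereal_final[OF A0 B0 C0 that(1)])
    have "W / pi * Jr \<le> (A + B) * Jr" using WAB that(1) by (rule mult_right_mono)
    then show "\<bar>gfun a b \<theta> - gmk a b m k' k \<theta>\<bar> \<le> (A + B) * Jr" using that(2) by linarith
  qed
  have abs_sin_neg: "\<bar>sin ((y - x) / 2)\<bar> = \<bar>sin ((x - y) / 2)\<bar>" for x y :: real
  proof -
    have "(y - x) / 2 = - ((x - y) / 2)" by (simp only: minus_divide_left minus_diff_eq)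
    then show ?thesis by (simp only: sin_minus abs_minus_cancel)
  qed
  show ?thesis
  proof (cases "\<theta> = \<alpha>")
    case True
    show ?thesis
    proof (cases "\<alpha> = pi")
      case True
      have "Jfun a b \<theta> = \<infinity>" using \<open>\<theta> = \<alpha>\<close> True
        unfolding Jfun_def \<alpha>_def[symmetric] \<beta>_def[symmetric] by (simp add: Let_def inv_abs_0 inv_abs_not_minf)
      then show ?thesis using ereal_inf[OF A0 B0] unfolding A_def B_def C_def by simp
    next
      case False
      have a0: "0 < \<alpha>" "\<alpha> < pi" using ab False by auto
      have x1: "2 * \<alpha> \<noteq> 0" "\<bar>2 * \<alpha>\<bar> < 2 * pi" using a0 by auto
      have x3: "\<alpha> + \<beta> \<noteq> 0" "\<bar>\<alpha> + \<beta>\<bar> < 2 * pi" using ab a0 by auto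
      have x4: "\<beta> - \<alpha> \<noteq> 0" "\<bar>\<beta> - \<alpha>\<bar> < 2 * pi" using ab a0 by auto
      have s1: "sin \<alpha> \<noteq> 0" using sin_half_nz[OF x1] by simp
      have s3: "sin ((\<alpha> + \<beta>)/2) \<noteq> 0" using sin_half_nz[OF x3] .
      have s4: "sin ((\<alpha> - \<beta>)/2) \<noteq> 0" using sin_half_nz[OF x4] abs_sin_neg[of \<alpha> \<beta>] by auto
      define Jr where "Jr = 1 / \<bar>sin \<alpha>\<bar> + 1 / \<bar>sin ((\<alpha> + \<beta>)/2)\<bar> + 1 / \<bar>sin ((\<alpha> - \<beta>)/2)\<bar>"
      have J: "Jfun a b \<theta> = ereal Jr" using True
        unfolding Jfun_def \<alpha>_def[symmetric] \<beta>_def[symmetric] Jr_def by (simp add: Let_def inv_abs_nz s1 s3 s4)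
      have Jr0: "Jr \<ge> 0" unfolding Jr_def by simp
      have "\<bar>gfun a b \<theta> - gmk a b m k' k \<theta>\<bar> \<le> (\<bar>E (2*\<alpha>)\<bar> + \<bar>E 0\<bar> + \<bar>E (\<alpha> + \<beta>)\<bar> + \<bar>E (\<beta> - \<alpha>)\<bar>) / pi"
      proof -
        have "gfun a b \<theta> - gmk a b m k' k \<theta> = (E (\<alpha> + \<theta>) + E (\<alpha> - \<theta>) - E (\<beta> + \<theta>) - E (\<beta> - \<theta>)) / pi"
          by (rule diff) (use True False ab in auto)
        also have "\<dots> = (E (2*\<alpha>) + E 0 - E (\<alpha> + \<beta>) - E (\<beta> - \<alpha>)) / pi"
        proof -
          have "\<alpha> + \<theta> = 2*\<alpha>" "\<alpha> - \<theta> = 0" "\<beta> + \<theta> = \<alpha> + \<beta>" "\<beta> - \<theta> = \<beta> - \<alpha>" using True by simp_all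
          then show ?thesis by (simp only:)
        qed
        finally show ?thesis using tri[of "E (2*\<alpha>)" "E 0" "E (\<alpha> + \<beta>)" "E (\<beta> - \<alpha>)"] by simp
      qed
      also have "\<dots> \<le> (W / \<bar>sin \<alpha>\<bar> + 0 + W / \<bar>sin ((\<alpha> + \<beta>)/2)\<bar> + W / \<bar>sin ((\<alpha> - \<beta>)/2)\<bar>) / pi"
        using Eb[OF x1] Eb[OF x3] Eb[OF x4] E0 abs_sin_neg[of \<alpha> \<beta>] by (intro divide_right_mono) auto
      also have "\<dots> = W / pi * Jr" unfolding Jr_def by (simp add: field_simps)
      finally show ?thesis using Jfin[OF Jr0] unfolding J A_def B_def C_def by simp
    qed
  next
    case nA: False
    show ?thesis
    proof (cases "\<theta> = \<beta>")
      case True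
      show ?thesis
      proof (cases "\<beta> = 0")
        case True
        have "Jfun a b \<theta> = \<infinity>" using \<open>\<theta> = \<beta>\<close> True nA
          unfolding Jfun_def \<alpha>_def[symmetric] \<beta>_def[symmetric] by (simp add: Let_def inv_abs_0 inv_abs_not_minf)
        then show ?thesis using ereal_inf[OF A0 B0] unfolding A_def B_def C_def by simp
      next
        case False
        have b0: "0 < \<beta>" "\<beta> < pi" using ab False by auto
        have x1: "\<alpha> + \<beta> \<noteq> 0" "\<bar>\<alpha> + \<beta>\<bar> < 2 * pi" using ab b0 by auto
        have x2: "\<alpha> - \<beta> \<noteq> 0" "\<bar>\<alpha> - \<beta>\<bar> < 2 * pi" using ab b0 by auto
        have x3: "2 * \<beta> \<noteq> 0" "\<bar>2 * \<beta>\<bar> < 2 * pi" using b0 by auto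
        have s1: "sin ((\<alpha> + \<beta>)/2) \<noteq> 0" using sin_half_nz[OF x1] .
        have s2: "sin ((\<alpha> - \<beta>)/2) \<noteq> 0" using sin_half_nz[OF x2] .
        have s3: "sin \<beta> \<noteq> 0" using sin_half_nz[OF x3] by simp
        define Jr where "Jr = 1 / \<bar>sin \<beta>\<bar> + 1 / \<bar>sin ((\<alpha> + \<beta>)/2)\<bar> + 1 / \<bar>sin ((\<alpha> - \<beta>)/2)\<bar>"
        have J: "Jfun a b \<theta> = ereal Jr" using True nA
          unfolding Jfun_def \<alpha>_def[symmetric] \<beta>_def[symmetric] Jr_def by (simp add: Let_def inv_abs_nz s1 s2 s3)
        have Jr0: "Jr \<ge> 0" unfolding Jr_def by simp
        have "\<bar>gfun a b \<theta> - gmk a b m k' k \<theta>\<bar> \<le> (\<bar>E (\<alpha> + \<beta>)\<bar> + \<bar>E (\<alpha> - \<beta>)\<bar> + \<bar>E (2*\<beta>)\<bar> + \<bar>E 0\<bar>) / pi"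
        proof -
          have "gfun a b \<theta> - gmk a b m k' k \<theta> = (E (\<alpha> + \<theta>) + E (\<alpha> - \<theta>) - E (\<beta> + \<theta>) - E (\<beta> - \<theta>)) / pi"
            by (rule diff) (use True False nA ab in auto)
          also have "\<dots> = (E (\<alpha> + \<beta>) + E (\<alpha> - \<beta>) - E (2*\<beta>) - E 0) / pi"
          proof -
            have "\<alpha> + \<theta> = \<alpha> + \<beta>" "\<alpha> - \<theta> = \<alpha> - \<beta>" "\<beta> + \<theta> = 2*\<beta>" "\<beta> - \<theta> = 0" using True by simp_all
            then show ?thesis by (simp only:)
          qed
          finally show ?thesis using tri[of "E (\<alpha> + \<beta>)" "E (\<alpha> - \<beta>)" "E (2*\<beta>)" "E 0"] by simp
        qed
        also have "\<dots> \<le> (W / \<bar>sin ((\<alpha> + \<beta>)/2)\<bar> + W / \<bar>sin ((\<alpha> - \<beta>)/2)\<bar> + W / \<bar>sin \<beta>\<bar> + 0) / pi"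
          using Eb[OF x1] Eb[OF x2] Eb[OF x3] E0 by (intro divide_right_mono) auto
        also have "\<dots> = W / pi * Jr" unfolding Jr_def by (simp add: field_simps)
        finally show ?thesis using Jfin[OF Jr0] unfolding J A_def B_def C_def by simp
      qed
    next
      case nB: False
      have x1: "\<alpha> + \<theta> \<noteq> 0" "\<bar>\<alpha> + \<theta>\<bar> < 2 * pi" using ab assms nA by auto
      have x2: "\<alpha> - \<theta> \<noteq> 0" "\<bar>\<alpha> - \<theta>\<bar> < 2 * pi" using ab assms nA by auto
      have x3: "\<beta> + \<theta> \<noteq> 0" "\<bar>\<beta> + \<theta>\<bar> < 2 * pi" using ab assms nB by auto
      have x4: "\<beta> - \<theta> \<noteq> 0" "\<bar>\<beta> - \<theta>\<bar> < 2 * pi" using ab assms nB by auto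
      have s1: "sin ((\<theta> + \<alpha>)/2) \<noteq> 0" using sin_half_nz[OF x1] by (simp add: add.commute)
      have s2: "sin ((\<theta> - \<alpha>)/2) \<noteq> 0" using sin_half_nz[OF x2] abs_sin_neg[of \<theta> \<alpha>] by auto
      have s3: "sin ((\<theta> + \<beta>)/2) \<noteq> 0" using sin_half_nz[OF x3] by (simp add: add.commute)
      have s4: "sin ((\<theta> - \<beta>)/2) \<noteq> 0" using sin_half_nz[OF x4] abs_sin_neg[of \<theta> \<beta>] by auto
      define Jr where "Jr = 1 / \<bar>sin ((\<theta> + \<alpha>)/2)\<bar> + 1 / \<bar>sin ((\<theta> - \<alpha>)/2)\<bar> + 1 / \<bar>sin ((\<theta> + \<beta>)/2)\<bar> + 1 / \<bar>sin ((\<theta> - \<beta>)/2)\<bar>"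
      have J: "Jfun a b \<theta> = ereal Jr" using nA nB
        unfolding Jfun_def \<alpha>_def[symmetric] \<beta>_def[symmetric] Jr_def by (simp add: Let_def inv_abs_nz s1 s2 s3 s4)
      have Jr0: "Jr \<ge> 0" unfolding Jr_def by simp
      have "\<bar>gfun a b \<theta> - gmk a b m k' k \<theta>\<bar> \<le> (\<bar>E (\<alpha> + \<theta>)\<bar> + \<bar>E (\<alpha> - \<theta>)\<bar> + \<bar>E (\<beta> + \<theta>)\<bar> + \<bar>E (\<beta> - \<theta>)\<bar>) / pi"
      proof -
        have "gfun a b \<theta> - gmk a b m k' k \<theta> = (E (\<alpha> + \<theta>) + E (\<alpha> - \<theta>) - E (\<beta> + \<theta>) - E (\<beta> - \<theta>)) / pi"
          by (rule diff) (use nA nB in auto)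
        then show ?thesis using tri[of "E (\<alpha> + \<theta>)" "E (\<alpha> - \<theta>)" "E (\<beta> + \<theta>)" "E (\<beta> - \<theta>)"] by simp
      qed
      also have "\<dots> \<le> (W / \<bar>sin ((\<theta> + \<alpha>)/2)\<bar> + W / \<bar>sin ((\<theta> - \<alpha>)/2)\<bar> + W / \<bar>sin ((\<theta> + \<beta>)/2)\<bar> + W / \<bar>sin ((\<theta> - \<beta>)/2)\<bar>) / pi"
        using Eb[OF x1] Eb[OF x2] Eb[OF x3] Eb[OF x4] abs_sin_neg[of \<theta> \<alpha>] abs_sin_neg[of \<theta> \<beta>]
        by (intro divide_right_mono) (auto simp: add.commute[of \<alpha> \<theta>] add.commute[of \<beta> \<theta>])
      also have "\<dots> = W / pi * Jr" unfolding Jr_def by (simp add: field_simps)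
      finally show ?thesis using Jfin[OF Jr0] unfolding J A_def B_def C_def by simp
    qed
  qed
qed

end
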